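(* Consider a general POVM attack on two-photon SARG04: Eve uses a POVM $\{M_{\mathrm{vac}},M_0,\dots,M_{J-1}\}$ on $\mathbb{C}^2\otimes\mathbb{C}^2$ (positive operators summing to $I$, $J$ arbitrary) and, on outcome $i$, sends Bob an arbitrary qubit state $|\sigma_i\rangle$ (on outcome vac she sends nothing). The resulting unnormalized state of Alice and Bob is $$\rho_{AB}=\sum_{k=0}^{3}\sum_{i=0}^{J-1}\operatorname{Tr}_{E}\!\Big[(I_A\otimes M_i)(I_A\otimes R^k\!\otimes\! R^k)|\Psi\rangle\langle\Psi|(I_A\otimes R^{-k}\!\otimes\! R^{-k})\Big]\otimes F R^{-k}|\sigma_i\rangle\langle\sigma_i|R^{k}F^\dagger,$$ with $|\Psi\rangle=|0_z\rangle_A|\varphi_0\varphi_0\rangle_E+|1_z\rangle_A|\varphi_1\varphi_1\rangle_E$, and the induced bit error rate (when $\operatorname{Tr}\rho_{AB}>0$) is $$e_b=\frac{\langle0_z1_z|\rho_{AB}|0_z1_z\rangle+\langle1_z0_z|\rho_{AB}|1_z0_z\rangle}{\operatorname{Tr}\rho_{AB}}.$$ Then the smallest bit error rate Eve can induce by such an attack is $\frac{3-\sqrt2}{7}\approx 22.65\%$. Moreover, this minimum is attained by the POVM with $J=4$, $$M_m=|\chi_m\rangle\langle\chi_m|,\quad |\chi_m\rangle=\lambda_+|\varphi_m\rangle|\varphi_m\rangle+\lambda_-|\varphi_{m+2}\rangle|\varphi_{m+2}\rangle,\quad m=0,\dots,3,$$ $$M_{\mathrm{vac}}=\tfrac12\big(|\varphi_0\varphi_2\rangle-|\varphi_2\varphi_0\rangle\big)\big(\langle\varphi_0\varphi_2|-\langle\varphi_2\varphi_0|\big)=\tfrac12\big(|\varphi_3\varphi_1\rangle-|\varphi_1\varphi_3\rangle\big)\big(\langle\varphi_3\varphi_1|-\langle\varphi_1\varphi_3|\big),$$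 where $\lambda_\pm=(\pm2+\sqrt2)/4$, with Eve sending $|\sigma_m\rangle=|\varphi_m\rangle$ on outcome $m$; the outcome vac never occurs since the states $|\varphi_m\rangle|\varphi_m\rangle$ are orthogonal to the support of $M_{\mathrm{vac}}$.
   Context: Qubits use bases related by $|0_x\rangle=(|0_z\rangle+|1_z\rangle)/\sqrt2$, $|1_x\rangle=(|0_z\rangle-|1_z\rangle)/\sqrt2$. Let $|\varphi_0\rangle=\cos(\pi/8)|0_x\rangle+\sin(\pi/8)|1_x\rangle$, $R=\cos(\pi/4)I+\sin(\pi/4)(|1_x\rangle\langle0_x|-|0_x\rangle\langle1_x|)$, $|\varphi_m\rangle=R^{-m}|\varphi_0\rangle$ with indices taken mod 4, and $F=\sin(\pi/8)|0_x\rangle\langle0_x|+\cos(\pi/8)|1_x\rangle\langle1_x|$ (Bob's successful filtering, i.e. conclusive result). Alice emits two identical photons and applies $R^k\otimes R^k$, $k\in\{0,1,2,3\}$ uniformly; Eve intercepts both; Bob applies $R^{-k}$ then $F$ to the qubit he receives. $\operatorname{Tr}_E$ is the partial trace over the two transmitted qubits. *)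

theory Defs
  imports Complex_Main
begin

text \<open>A qubit is indexed by bool (False = 0_z, True = 1_z); composite systems by
products of index types.\<close>

type_synonym 'i ket = "'i \<Rightarrow> complex"
type_synonym 'i op = "'i \<Rightarrow> 'i \<Rightarrow> complex"

definition idop :: "('i::finite) op" where
  "idop i j = (if i = j then 1 else 0)"

definition mmul :: "('i::finite) op \<Rightarrow> 'i op \<Rightarrow> 'i op" where
  "mmul A B i j = (\<Sum>k\<in>UNIV. A i k * B k j)"

definition app :: "('i::finite) op \<Rightarrow> 'i ket \<Rightarrow> 'i ket" where
  "app A v i = (\<Sum>j\<in>UNIV. A i j * v j)"

definition adj :: "('i::finite) op \<Rightarrow> 'i op" where
  "adj A i j = cnj (A j i)"

definition mpow :: "('i::finite) op \<Rightarrow> nat \<Rightarrow> 'i op" where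
  "mpow A n = (mmul A ^^ n) idop"

definition outer :: "('i::finite) ket \<Rightarrow> 'i ket \<Rightarrow> 'i op" where
  "outer u v i j = u i * cnj (v j)"

definition inner :: "('i::finite) ket \<Rightarrow> 'i ket \<Rightarrow> complex" where
  "inner u v = (\<Sum>i\<in>UNIV. cnj (u i) * v i)"

definition trace :: "('i::finite) op \<Rightarrow> complex" where
  "trace A = (\<Sum>i\<in>UNIV. A i i)"

definition tket :: "('i::finite) ket \<Rightarrow> ('j::finite) ket \<Rightarrow> ('i \<times> 'j) ket" where
  "tket u v = (\<lambda>(i, j). u i * v j)"

definition topr :: "('i::finite) op \<Rightarrow> ('j::finite) op \<Rightarrow> ('i \<times> 'j) op" where
  "topr A B = (\<lambda>(i, j) (k, l). A i k * B j l)"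

definition ptrace2 :: "(('i::finite) \<times> ('j::finite)) op \<Rightarrow> 'i op" where
  "ptrace2 X a a' = (\<Sum>e\<in>UNIV. X (a, e) (a', e))"

definition positive_op :: "('i::finite) op \<Rightarrow> bool" where
  "positive_op A \<longleftrightarrow> (\<forall>v. Im (inner v (app A v)) = 0 \<and> Re (inner v (app A v)) \<ge> 0)"

definition ket0z :: "bool ket" where "ket0z b = (if b then 0 else 1)"
definition ket1z :: "bool ket" where "ket1z b = (if b then 1 else 0)"

definition ket0x :: "bool ket" where
  "ket0x b = (ket0z b + ket1z b) / complex_of_real (sqrt 2)"
definition ket1x :: "bool ket" where
  "ket1x b = (ket0z b - ket1z b) / complex_of_real (sqrt 2)"

definition phi0 :: "bool ket" where
  "phi0 b = complex_of_real (cos (pi/8)) * ket0x b + complex_of_real (sin (pi/8)) * ket1x b"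

definition Rop :: "bool op" where
  "Rop i j = complex_of_real (cos (pi/4)) * idop i j
           + complex_of_real (sin (pi/4)) * (outer ket1x ket0x i j - outer ket0x ket1x i j)"

text \<open>R is a real rotation (orthogonal), so its inverse is its adjoint;
R^(-k) is written as (R^(-1))^k = (adj R)^k.\<close>
definition Rinv :: "bool op" where "Rinv = adj Rop"

definition phi :: "nat \<Rightarrow> bool ket" where
  "phi m = app (mpow Rinv (m mod 4)) phi0"

definition Fop :: "bool op" where
  "Fop i j = complex_of_real (sin (pi/8)) * outer ket0x ket0x i j
           + complex_of_real (cos (pi/8)) * outer ket1x ket1x i j"

definition Psi :: "(bool \<times> bool \<times> bool) ket" where
  "Psi = (\<lambda>x. tket ket0z (tket phi0 phi0) x + tket ket1z (tket (phi 1) (phi 1)) x)"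

definition rhoAB :: "nat \<Rightarrow> (nat \<Rightarrow> (bool \<times> bool) op) \<Rightarrow> (nat \<Rightarrow> bool ket) \<Rightarrow> (bool \<times> bool) op" where
  "rhoAB J M sigma = (\<lambda>x y. \<Sum>k<4. \<Sum>i<J.
      topr
        (ptrace2 (mmul (topr idop (M i))
                 (mmul (topr idop (topr (mpow Rop k) (mpow Rop k)))
                 (mmul (outer Psi Psi)
                       (topr idop (topr (mpow Rinv k) (mpow Rinv k)))))))
        (mmul Fop (mmul (mpow Rinv k) (mmul (outer (sigma i) (sigma i))
                 (mmul (mpow Rop k) (adj Fop)))))
      x y)"

text \<open>Bit error rate (<0_z 1_z|rho|0_z 1_z> + <1_z 0_z|rho|1_z 0_z>) / Tr rho.
These quantities are real for a positive rho; we take real parts.\<close>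
definition ebit :: "(bool \<times> bool) op \<Rightarrow> real" where
  "ebit \<rho> = Re (\<rho> (False, True) (False, True) + \<rho> (True, False) (True, False)) / Re (trace \<rho>)"

definition valid_attack :: "nat \<Rightarrow> (bool \<times> bool) op \<Rightarrow> (nat \<Rightarrow> (bool \<times> bool) op) \<Rightarrow> (nat \<Rightarrow> bool ket) \<Rightarrow> bool" where
  "valid_attack J Mvac M sigma \<longleftrightarrow>
     positive_op Mvac \<and> (\<forall>i<J. positive_op (M i)) \<and>
     (\<forall>x y. Mvac x y + (\<Sum>i<J. M i x y) = idop x y) \<and>
     (\<forall>i<J. inner (sigma i) (sigma i) = 1)"

definition lam_plus :: real where "lam_plus = (2 + sqrt 2) / 4"
definition lam_minus :: real where "lam_minus = (-2 + sqrt 2) / 4"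

definition chi :: "nat \<Rightarrow> (bool \<times> bool) ket" where
  "chi m = (\<lambda>x. complex_of_real lam_plus * tket (phi m) (phi m) x
              + complex_of_real lam_minus * tket (phi (m + 2)) (phi (m + 2)) x)"

definition Mopt :: "nat \<Rightarrow> (bool \<times> bool) op" where
  "Mopt m = outer (chi m) (chi m)"

definition Mvac_opt :: "(bool \<times> bool) op" where
  "Mvac_opt = (\<lambda>x y. outer (\<lambda>z. tket (phi 0) (phi 2) z - tket (phi 2) (phi 0) z)
                           (\<lambda>z. tket (phi 0) (phi 2) z - tket (phi 2) (phi 0) z) x y / 2)"

end

theory Submission
  imports Defs
begin

lemma sum_bool: "sum f (UNIV::bool set) = f False + f True"
  by (simp add: UNIV_bool add.commute)

lemma sum_pair: "sum f (UNIV::('a::finite \<times> 'b::finite) set) = (\<Sum>a\<in>UNIV. \<Sum>b\<in>UNIV. f (a,b))"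
  by (simp add: sum.cartesian_product)

lemma app_outer: "app (outer u v) w = (\<lambda>i. u i * inner v w)"
  by (auto simp: app_def outer_def inner_def sum_distrib_left mult.assoc mult.left_commute)

lemma mmul_outer_left: "mmul A (outer u v) = outer (app A u) v"
  by (auto simp: mmul_def outer_def app_def sum_distrib_right mult.assoc intro!: ext)

lemma mmul_outer_right: "mmul (outer u v) B = outer u (app (adj B) v)"
  by (auto simp: mmul_def outer_def app_def adj_def sum_distrib_left mult_ac intro!: ext)

lemma app_mmul: "app (mmul A B) v = app A (app B v)"
  apply (rule ext)
  apply (simp add: app_def mmul_def sum_distrib_left sum_distrib_right mult.assoc)
  apply (rule sum.swap)
  done

lemma mmul_assoc: "mmul (mmul A B) C = mmul A (mmul B C)"
  apply (rule ext)+
  apply (simp add: mmul_def sum_distrib_left sum_distrib_right mult.assoc)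
  apply (rule sum.swap)
  done

lemma adj_mmul: "adj (mmul A B) = mmul (adj B) (adj A)"
  by (auto simp: adj_def mmul_def mult.commute intro!: ext)

lemma adj_adj[simp]: "adj (adj A) = A"
  by (auto simp: adj_def intro!: ext)

lemma adj_idop[simp]: "adj idop = idop"
  by (auto simp: adj_def idop_def intro!: ext)

lemma if01_mult_left: "(if P then 1 else 0) * (x::complex) = (if P then x else 0)" by simp
lemma if01_mult_right: "(x::complex) * (if P then 1 else 0) = (if P then x else 0)" by simp

lemma if0_mult: "(if P then x else 0) * (y::complex) = (if P then x * y else 0)" by simp

lemma sum_if0_out: "(\<Sum>b\<in>S. if P then f b else 0) = (if P then sum f S else (0::complex))" by simp

lemma app_idop[simp]: "app idop v = v"
  by (auto simp: app_def idop_def if01_mult_left intro!: ext)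

lemma mmul_idop_left[simp]: "mmul idop A = A"
  by (auto simp: mmul_def idop_def if01_mult_left intro!: ext)

lemma mmul_idop_right[simp]: "mmul A idop = A"
  by (auto simp: mmul_def idop_def if01_mult_right intro!: ext)

lemma mpow_0[simp]: "mpow A 0 = idop"
  by (simp add: mpow_def)

lemma mpow_Suc: "mpow A (Suc n) = mmul A (mpow A n)"
  by (simp add: mpow_def)

lemma mpow_Suc': "mpow A (Suc n) = mmul (mpow A n) A"
  by (induction n) (simp_all add: mpow_Suc, metis mmul_assoc mpow_Suc)

lemma adj_mpow: "adj (mpow A n) = mpow (adj A) n"
  by (induction n) (simp_all add: mpow_Suc adj_mmul flip: mpow_Suc')

lemma app_topr_tket: "app (topr A B) (tket u v) = tket (app A u) (app B v)"
  apply (rule ext)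
  apply (clarsimp simp: app_def topr_def tket_def sum_pair sum_distrib_left sum_distrib_right)
  apply (subst sum.swap)
  apply (simp add: mult_ac)
  done

lemma adj_topr: "adj (topr A B) = topr (adj A) (adj B)"
  by (auto simp: adj_def topr_def intro!: ext)

lemma app_add: "app A (\<lambda>x. u x + v x) = (\<lambda>i. app A u i + app A v i)"
  by (auto simp: app_def distrib_left sum.distrib intro!: ext)

lemma ptrace2_diag: "ptrace2 (mmul (topr idop M) (outer x x)) a a
   = inner (\<lambda>e. x (a,e)) (app M (\<lambda>e. x (a,e)))"
proof -
  have "app (topr idop M) x (a,e) = app M (\<lambda>e. x (a,e)) e" for e
    by (simp add: app_def topr_def sum_pair idop_def if01_mult_left if0_mult sum_if0_out)
  then show ?thesis
    by (simp add: mmul_outer_left ptrace2_def outer_def inner_def mult.commute)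
qed

definition Wv :: "nat \<Rightarrow> bool \<Rightarrow> bool ket" where
  "Wv k a = app (mpow Rop k) (if a then phi 1 else phi0)"
definition Tv :: "nat \<Rightarrow> bool ket \<Rightarrow> bool ket" where
  "Tv k v = app Fop (app (mpow Rinv k) v)"
definition qf :: "('i::finite) op \<Rightarrow> 'i ket \<Rightarrow> complex" where
  "qf M v = inner v (app M v)"

lemma adj_Rinv_pow: "adj (mpow Rinv k) = mpow Rop k"
  by (simp add: adj_mpow Rinv_def)
lemma adj_Rop_pow: "adj (mpow Rop k) = mpow Rinv k"
  by (simp add: adj_mpow Rinv_def)

lemma Eve_part:
  "ptrace2 (mmul (topr idop M)
                 (mmul (topr idop (topr (mpow Rop k) (mpow Rop k)))
                 (mmul (outer Psi Psi)
                       (topr idop (topr (mpow Rinv k) (mpow Rinv k)))))) a a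
   = qf M (tket (Wv k a) (Wv k a))"
proof -
  define x where "x = app (topr idop (topr (mpow Rop k) (mpow Rop k))) Psi"
  have 1: "mmul (topr idop (topr (mpow Rop k) (mpow Rop k)))
                 (mmul (outer Psi Psi)
                       (topr idop (topr (mpow Rinv k) (mpow Rinv k)))) = outer x x"
    by (simp add: mmul_outer_right mmul_outer_left adj_topr adj_Rinv_pow x_def)
  have 2: "(\<lambda>e. x (a,e)) = tket (Wv k a) (Wv k a)"
    unfolding x_def Psi_def app_add app_topr_tket app_idop
    by (cases a) (auto simp: Wv_def tket_def ket0z_def ket1z_def)
  show ?thesis unfolding 1 ptrace2_diag 2 qf_def ..
qed

lemma Bob_part:
  "mmul Fop (mmul (mpow Rinv k) (mmul (outer v v) (mmul (mpow Rop k) (adj Fop))))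
   = outer (Tv k v) (Tv k v)"
  by (simp add: mmul_outer_right mmul_outer_left adj_mmul adj_Rop_pow app_mmul Tv_def)

lemma topr_at: "topr X Y (a,b) (c,d) = X a c * Y b d"
  by (simp add: topr_def)

lemma rho_diag:
  "rhoAB J M sigma (a,b) (a,b) = (\<Sum>k<4. \<Sum>i<J. qf (M i) (tket (Wv k a) (Wv k a))
       * (Tv k (sigma i) b * cnj (Tv k (sigma i) b)))"
  by (simp only: rhoAB_def topr_at Eve_part Bob_part outer_def)

abbreviation "cc \<equiv> cos (pi/8)"
abbreviation "ss \<equiv> sin (pi/8)"
abbreviation "rr \<equiv> sqrt (2::real)"

lemma cc_pos: "cc > 0" by (rule cos_gt_zero) (use pi_gt_zero in auto)
lemma ss_pos: "ss > 0" by (rule sin_gt_zero) (use pi_gt_zero in auto)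

lemma cc2: "cc * cc = (2 + rr)/4"
proof -
  have "cos (2*(pi/8)) = 2 * cc^2 - 1" by (rule cos_double_cos)
  moreover have "2*(pi/8) = pi/4" by simp
  ultimately show ?thesis by (simp add: cos_45 power2_eq_square)
qed
lemma ss2: "ss * ss = (2 - rr)/4"
  using cc2 sin_cos_squared_add[of "pi/8"] by (simp add: power2_eq_square)
lemma sc: "ss * cc = rr/4"
proof -
  have "sin (2*(pi/8)) = 2 * ss * cc" by (rule sin_double)
  moreover have "2*(pi/8) = pi/4" by simp
  ultimately show ?thesis by (simp add: sin_45)
qed
lemma rr2: "rr * rr = 2" by simp
lemma ss_eq: "ss = (rr - 1) * cc"
proof -
  have "(rr - 1) * cc * cc = (rr - 1) * ((2+rr)/4)" using cc2 by (simp add: mult.assoc)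
  also have "\<dots> = rr/4" by (simp add: field_simps algebra_simps)
  finally have A: "(rr - 1) * cc * cc = rr/4" .
  have "ss * cc = (rr - 1) * cc * cc" unfolding A by (rule sc)
  then show ?thesis using cc_pos by (metis mult_right_cancel less_irrefl)
qed
lemma rc: "rr * cc = cc + ss"
  by (simp add: ss_eq algebra_simps)
lemma rs: "rr * ss = cc - ss"
  by (simp add: ss_eq algebra_simps)

lemmas red0 = cc2 ss2 sc rr2 rc rs
lemma red1: "cc * (cc * x) = (2 + rr)/4 * x" "ss * (ss * x) = (2 - rr)/4 * x"
  "ss * (cc * x) = rr/4 * x" "cc * (ss * x) = rr/4 * x" "cc * ss = rr/4"
  "rr * (rr * x) = 2 * x" "rr * (cc * x) = (cc + ss) * x" "rr * (ss * x) = (cc - ss) * x"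
  "cc * rr = cc + ss" "ss * rr = cc - ss" "cc * (rr * x) = (cc + ss) * x" "ss * (rr * x) = (cc - ss) * x"
  by (simp_all add: red0 mult.assoc[symmetric] mult.commute[of cc ss] mult.commute[of cc rr] mult.commute[of ss rr])
lemmas red = red0 red1

lemma test1: "(rr/2) * (cc - ss) = ss"
  by (simp add: field_simps algebra_simps red)

definition v2 :: "complex \<Rightarrow> complex \<Rightarrow> bool ket" where
  "v2 a b = (\<lambda>i. if i then b else a)"
definition m2 :: "complex \<Rightarrow> complex \<Rightarrow> complex \<Rightarrow> complex \<Rightarrow> bool op" where
  "m2 a b c d = (\<lambda>i j. if i then (if j then d else c) else (if j then b else a))"

lemma v2_app[simp]: "v2 a b False = a" "v2 a b True = b" by (simp_all add: v2_def)
lemma m2_app[simp]: "m2 a b c d False False = a" "m2 a b c d False True = b"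
  "m2 a b c d True False = c" "m2 a b c d True True = d" by (simp_all add: m2_def)

lemma app_m2_v2[simp]: "app (m2 a b c d) (v2 x y) = v2 (a*x + b*y) (c*x + d*y)"
  by (auto simp: app_def sum_bool v2_def m2_def intro!: ext)
lemma app_m2: "app (m2 a b c d) v = v2 (a * v False + b * v True) (c * v False + d * v True)"
  by (auto simp: app_def sum_bool v2_def m2_def intro!: ext)
lemma mmul_m2[simp]: "mmul (m2 a b c d) (m2 a' b' c' d') = m2 (a*a' + b*c') (a*b' + b*d') (c*a' + d*c') (c*b' + d*d')"
  by (auto simp: mmul_def sum_bool m2_def intro!: ext)
lemma adj_m2[simp]: "adj (m2 a b c d) = m2 (cnj a) (cnj c) (cnj b) (cnj d)"
  by (auto simp: adj_def m2_def intro!: ext)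
lemma v2_eq[simp]: "v2 a b = v2 c d \<longleftrightarrow> a = c \<and> b = d"
  by (metis v2_app)
lemma m2_eq[simp]: "m2 a b c d = m2 a' b' c' d' \<longleftrightarrow> a = a' \<and> b = b' \<and> c = c' \<and> d = d'"
  by (metis m2_app)
lemma idop_m2: "(idop::bool op) = m2 1 0 0 1"
  by (auto simp: idop_def m2_def intro!: ext)

abbreviation "C \<equiv> complex_of_real cc"
abbreviation "S \<equiv> complex_of_real ss"
abbreviation "Rt \<equiv> complex_of_real rr"

lemma cred0: "C * C = (2 + Rt)/4" "S * S = (2 - Rt)/4" "S * C = Rt/4" "Rt * Rt = 2"
  "Rt * C = C + S" "Rt * S = C - S"
  by (simp_all only: of_real_mult[symmetric] red0) simp_all
lemma cred1: "C * (C * x) = (2 + Rt)/4 * x" "S * (S * x) = (2 - Rt)/4 * x"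
  "S * (C * x) = Rt/4 * x" "C * (S * x) = Rt/4 * x" "C * S = Rt/4"
  "Rt * (Rt * x) = 2 * x" "Rt * (C * x) = (C + S) * x" "Rt * (S * x) = (C - S) * x"
  "C * Rt = C + S" "S * Rt = C - S" "C * (Rt * x) = (C + S) * x" "S * (Rt * x) = (C - S) * x"
  by (simp_all add: cred0 mult.assoc[symmetric] mult.commute[of C S] mult.commute[of C Rt] mult.commute[of S Rt])
lemmas cred = cred0 cred1

lemma Rt_nz[simp]: "Rt \<noteq> 0" by simp

lemma ket0x_val: "ket0x = v2 (1/Rt) (1/Rt)"
  by (auto simp: ket0x_def ket0z_def ket1z_def v2_def intro!: ext)
lemma ket1x_val: "ket1x = v2 (1/Rt) (-1/Rt)"
  by (auto simp: ket1x_def ket0z_def ket1z_def v2_def intro!: ext)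
lemma phi0_val: "phi0 = v2 C S"
  unfolding phi0_def ket0x_val ket1x_val
  by (auto simp: v2_def field_simps cred intro!: ext)
lemma outer_v2: "outer (v2 a b) (v2 c d) = m2 (a * cnj c) (a * cnj d) (b * cnj c) (b * cnj d)"
  by (auto simp: outer_def v2_def m2_def intro!: ext)
lemma Rop_val: "Rop = m2 (Rt/2) (Rt/2) (-Rt/2) (Rt/2)"
  unfolding Rop_def ket0x_val ket1x_val outer_v2 idop_m2
  by (auto simp: m2_def cos_45 sin_45 field_simps cred intro!: ext)
lemma Rinv_val: "Rinv = m2 (Rt/2) (-Rt/2) (Rt/2) (Rt/2)"
  by (simp add: Rinv_def Rop_val)
lemma Fop_val: "Fop = m2 ((S+C)/2) ((S-C)/2) ((S-C)/2) ((S+C)/2)"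
  unfolding Fop_def ket0x_val ket1x_val outer_v2
  by (auto simp: m2_def field_simps cred intro!: ext)

lemma mpow_1: "mpow A (Suc 0) = A" by (simp add: mpow_def)
lemma mpow_2: "mpow A 2 = mmul A A" by (simp add: mpow_def numeral_2_eq_2)
lemma mpow_3: "mpow A 3 = mmul A (mmul A A)" by (simp add: mpow_def numeral_3_eq_3)

lemma Rop2: "mpow Rop 2 = m2 0 1 (-1) 0"
  by (simp add: mpow_2 Rop_val field_simps cred)
lemma Rop3: "mpow Rop 3 = m2 (-Rt/2) (Rt/2) (-Rt/2) (-Rt/2)"
  by (simp add: mpow_3 Rop_val field_simps cred)
lemma Rinv2: "mpow Rinv 2 = m2 0 (-1) 1 0"
  by (simp add: mpow_2 Rinv_val field_simps cred)
lemma Rinv3: "mpow Rinv 3 = m2 (-Rt/2) (-Rt/2) (Rt/2) (-Rt/2)"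
  by (simp add: mpow_3 Rinv_val field_simps cred)

lemma phi_0: "phi 0 = v2 C S" by (simp add: phi_def phi0_val)
lemma phi_1: "phi (Suc 0) = v2 S C" by (simp add: phi_def phi0_val mpow_1 Rinv_val field_simps cred)
lemma phi_2: "phi 2 = v2 (-S) C" by (simp add: phi_def phi0_val Rinv2)
lemma phi_3: "phi 3 = v2 (-C) S"
proof -
  have "phi 3 = app (mpow Rinv 3) phi0" by (simp add: phi_def)
  then show ?thesis by (simp add: phi0_val Rinv3 field_simps cred)
qed

lemma Wv_0: "Wv 0 a = (if a then v2 S C else v2 C S)"
  by (simp add: Wv_def phi_1 phi0_val)
lemma Wv_1: "Wv 1 a = (if a then v2 C S else v2 C (-S))"
  by (simp add: Wv_def phi_1 phi0_val mpow_1 Rop_val field_simps cred)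
lemma Wv_2: "Wv 2 a = (if a then v2 C (-S) else v2 S (-C))"
  by (simp add: Wv_def phi_1 phi0_val Rop2)
lemma Wv_3: "Wv 3 a = (if a then v2 S (-C) else v2 (-S) (-C))"
  by (simp add: Wv_def phi_1 phi0_val Rop3 field_simps cred)

abbreviation "pp \<equiv> (S + C)/2"
abbreviation "mm \<equiv> (S - C)/2"
lemma Tv_0: "Tv 0 v = app (m2 pp mm mm pp) v"
  by (simp add: Tv_def Fop_val)
lemma Tv_1: "Tv 1 v = app (m2 (-mm) (-pp) (-mm) pp) v"
  by (simp add: Tv_def Fop_val mpow_1 Rinv_val app_mmul[symmetric] app_m2 field_simps cred)
lemma Tv_2: "Tv 2 v = app (m2 mm (-pp) pp (-mm)) v"
  by (simp add: Tv_def Fop_val Rinv2 app_mmul[symmetric] app_m2 field_simps cred)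
lemma Tv_3: "Tv 3 v = app (m2 (-pp) mm pp mm) v"
  by (simp add: Tv_def Fop_val Rinv3 app_mmul[symmetric] app_m2 field_simps cred)

abbreviation "Cr \<equiv> (3 - Rt)/7"
abbreviation "dd \<equiv> (11 + 8*Rt)/28"

definition V1 :: "complex \<Rightarrow> complex \<Rightarrow> (bool \<times> bool) ket" where
  "V1 x0 x1 = (\<lambda>(i,j). if i = j then (if i then x0 else x0*(3-2*Rt)) else x1*(1-Rt))"
definition V2 :: "complex \<Rightarrow> complex \<Rightarrow> (bool \<times> bool) ket" where
  "V2 x0 x1 = (\<lambda>(i,j). if i = j then (if i then x1*(3-2*Rt) else x1) else x0*(1-Rt))"

definition coef :: "nat \<Rightarrow> bool \<Rightarrow> bool ket \<Rightarrow> complex" where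
  "coef k a X = (Tv k X (\<not>a))^2 - Cr * ((Tv k X False)^2 + (Tv k X True)^2)"

lemma sum4: "(\<Sum>k<4. f k) = f 0 + f 1 + f 2 + f (3::nat)"
  by (simp add: eval_nat_numeral)

lemma tket_v2: "tket (v2 a b) (v2 c d) (i,j) = (if i then b else a) * (if j then d else c)"
  by (simp add: tket_def v2_def)

lemma entry_id:
  "(\<Sum>k<4. \<Sum>a\<in>UNIV. coef k a (v2 x0 x1) * tket (Wv k a) (Wv k a) e * tket (Wv k a) (Wv k a) f)
    = dd * (V1 x0 x1 e * V1 x0 x1 f + V2 x0 x1 e * V2 x0 x1 f)"
proof -
  obtain e1 e2 f1 f2 where ef: "e = (e1,e2)" "f = (f1,f2)" by fastforce
  show ?thesis
    unfolding sum4 sum_bool coef_def ef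
    apply (simp only: Wv_0 Wv_1 Wv_2 Wv_3 Tv_0 Tv_1 Tv_2 Tv_3 if_True if_False not_True_eq_False not_False_eq_True
        app_m2_v2 v2_app tket_v2)
    apply (cases e1; cases e2; cases f1; cases f2)
    apply (simp_all add: V1_def V2_def field_simps cred power2_eq_square)
    done
qed

lemma Wv_1': "Wv (Suc 0) a = (if a then v2 C S else v2 C (-S))" using Wv_1 by simp
lemma Tv_1': "Tv (Suc 0) v = app (m2 (-mm) (-pp) (-mm) pp) v" using Tv_1 by simp
lemmas Wv_all = Wv_0 Wv_1 Wv_1' Wv_2 Wv_3
lemmas Tv_all = Tv_0 Tv_1 Tv_1' Tv_2 Tv_3
lemma k4_cases: "k < (4::nat) \<Longrightarrow> k = 0 \<or> k = 1 \<or> k = 2 \<or> k = 3" by auto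
lemma Wv_real: "k < 4 \<Longrightarrow> cnj (Wv k a b) = Wv k a b"
  by (drule k4_cases) (elim disjE; simp add: Wv_all v2_def)
lemma tket_real: "(\<And>b. cnj (u b) = u b) \<Longrightarrow> cnj (tket u u e) = tket u u e"
  by (cases e) (simp add: tket_def)

definition qf' :: "('i::finite) op \<Rightarrow> 'i ket \<Rightarrow> complex" where
  "qf' M z = (\<Sum>e\<in>UNIV. \<Sum>f\<in>UNIV. z e * M e f * z f)"

lemma qf_eq_qf': "(\<And>e. cnj (z e) = z e) \<Longrightarrow> qf M z = qf' M z"
  by (simp add: qf_def qf'_def inner_def app_def sum_distrib_left mult.assoc)

lemma qf'_sum: "finite J \<Longrightarrow> (\<Sum>j\<in>J. g j * qf' M (z j))
   = (\<Sum>e\<in>UNIV. \<Sum>f\<in>UNIV. M e f * (\<Sum>j\<in>J. g j * z j e * z j f))"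
proof -
  assume "finite J"
  have "(\<Sum>j\<in>J. g j * qf' M (z j)) = (\<Sum>j\<in>J. \<Sum>e\<in>UNIV. \<Sum>f\<in>UNIV. M e f * (g j * z j e * z j f))"
    by (simp add: qf'_def sum_distrib_left mult_ac)
  also have "\<dots> = (\<Sum>e\<in>UNIV. \<Sum>j\<in>J. \<Sum>f\<in>UNIV. M e f * (g j * z j e * z j f))"
    by (rule sum.swap)
  also have "\<dots> = (\<Sum>e\<in>UNIV. \<Sum>f\<in>UNIV. \<Sum>j\<in>J. M e f * (g j * z j e * z j f))"
    by (simp add: sum.swap[of _ J])
  also have "\<dots> = (\<Sum>e\<in>UNIV. \<Sum>f\<in>UNIV. M e f * (\<Sum>j\<in>J. g j * z j e * z j f))"
    by (simp add: sum_distrib_left)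
  finally show ?thesis .
qed

lemma normsq: "Im a = 0 \<Longrightarrow> Im b = 0 \<Longrightarrow> (a*z+b*w) * cnj (a*z+b*w)
   = (a*of_real (Re z) + b*of_real (Re w))^2 + (a*of_real (Im z) + b*of_real (Im w))^2"
  by (simp add: complex_eq_iff power2_eq_square algebra_simps)

definition Xre :: "bool ket \<Rightarrow> bool ket" where
  "Xre v = v2 (of_real (Re (v False))) (of_real (Re (v True)))"
definition Xim :: "bool ket \<Rightarrow> bool ket" where
  "Xim v = v2 (of_real (Im (v False))) (of_real (Im (v True)))"

lemma Tv_normsq: "k < 4 \<Longrightarrow> Tv k v b * cnj (Tv k v b) = (Tv k (Xre v) b)^2 + (Tv k (Xim v) b)^2"
  by (drule k4_cases) (elim disjE; cases b; simp only: Tv_all app_m2 Xre_def Xim_def v2_app; rule normsq; simp)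

lemma coef_sum: "k < 4 \<Longrightarrow> Tv k v (\<not>a) * cnj (Tv k v (\<not>a))
     - Cr * (Tv k v False * cnj (Tv k v False) + Tv k v True * cnj (Tv k v True))
   = coef k a (Xre v) + coef k a (Xim v)"
  by (simp add: Tv_normsq coef_def algebra_simps)

lemma W_real: "k < 4 \<Longrightarrow> cnj (tket (Wv k a) (Wv k a) e) = tket (Wv k a) (Wv k a) e"
  by (rule tket_real) (rule Wv_real)

lemma Xre_v2: "\<exists>x0 x1. Xre v = v2 x0 x1 \<and> cnj x0 = x0 \<and> cnj x1 = x1"
  by (auto simp: Xre_def)
lemma Xim_v2: "\<exists>x0 x1. Xim v = v2 x0 x1 \<and> cnj x0 = x0 \<and> cnj x1 = x1"
  by (auto simp: Xim_def)

lemma V_real: "cnj x0 = x0 \<Longrightarrow> cnj x1 = x1 \<Longrightarrow> cnj (V1 x0 x1 e) = V1 x0 x1 e \<and> cnj (V2 x0 x1 e) = V2 x0 x1 e"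
  by (cases e) (auto simp: V1_def V2_def)

lemma big_sum_id:
  "(\<Sum>k<4. \<Sum>a\<in>UNIV. (coef k a X + coef k a Y) * qf' M (tket (Wv k a) (Wv k a)))
   = dd * (qf' M (V1 x0 x1) + qf' M (V2 x0 x1) + qf' M (V1 y0 y1) + qf' M (V2 y0 y1))"
  if "X = v2 x0 x1" "Y = v2 y0 y1"
proof -
  let ?J = "{..<(4::nat)} \<times> (UNIV::bool set)"
  have "(\<Sum>k<4. \<Sum>a\<in>UNIV. (coef k a X + coef k a Y) * qf' M (tket (Wv k a) (Wv k a)))
     = (\<Sum>(k,a)\<in>?J. (coef k a X + coef k a Y) * qf' M (tket (Wv k a) (Wv k a)))"
    by (simp add: sum.cartesian_product)
  also have "\<dots> = (\<Sum>e\<in>UNIV. \<Sum>f\<in>UNIV. M e f * (\<Sum>(k,a)\<in>?J. (coef k a X + coef k a Y) * tket (Wv k a) (Wv k a) e * tket (Wv k a) (Wv k a) f))"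
    using qf'_sum[of ?J "\<lambda>(k,a). coef k a X + coef k a Y" M "\<lambda>(k,a). tket (Wv k a) (Wv k a)"]
    by (simp add: case_prod_unfold)
  also have "\<dots> = (\<Sum>e\<in>UNIV. \<Sum>f\<in>UNIV. M e f * (dd * (V1 x0 x1 e * V1 x0 x1 f + V2 x0 x1 e * V2 x0 x1 f)
        + dd * (V1 y0 y1 e * V1 y0 y1 f + V2 y0 y1 e * V2 y0 y1 f)))"
  proof -
    have "(\<Sum>(k,a)\<in>?J. (coef k a X + coef k a Y) * tket (Wv k a) (Wv k a) e * tket (Wv k a) (Wv k a) f)
       = dd * (V1 x0 x1 e * V1 x0 x1 f + V2 x0 x1 e * V2 x0 x1 f) + dd * (V1 y0 y1 e * V1 y0 y1 f + V2 y0 y1 e * V2 y0 y1 f)" for e f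
    proof -
      have "(\<Sum>(k,a)\<in>?J. (coef k a X + coef k a Y) * tket (Wv k a) (Wv k a) e * tket (Wv k a) (Wv k a) f)
        = (\<Sum>k<4. \<Sum>a\<in>UNIV. coef k a (v2 x0 x1) * tket (Wv k a) (Wv k a) e * tket (Wv k a) (Wv k a) f)
        + (\<Sum>k<4. \<Sum>a\<in>UNIV. coef k a (v2 y0 y1) * tket (Wv k a) (Wv k a) e * tket (Wv k a) (Wv k a) f)"
        unfolding that by (simp add: sum.cartesian_product[symmetric] distrib_right sum.distrib)
      then show ?thesis unfolding entry_id .
    qed
    then show ?thesis by simp
  qed
  also have "\<dots> = dd * (\<Sum>e\<in>UNIV. \<Sum>f\<in>UNIV. V1 x0 x1 e * M e f * V1 x0 x1 f + V2 x0 x1 e * M e f * V2 x0 x1 f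
       + V1 y0 y1 e * M e f * V1 y0 y1 f + V2 y0 y1 e * M e f * V2 y0 y1 f)"
    unfolding sum_distrib_left by (intro sum.cong refl) (simp add: field_simps)
  also have "\<dots> = dd * (qf' M (V1 x0 x1) + qf' M (V2 x0 x1) + qf' M (V1 y0 y1) + qf' M (V2 y0 y1))"
    by (simp only: qf'_def sum.distrib)
  finally show ?thesis .
qed

definition tt :: "nat \<Rightarrow> bool ket \<Rightarrow> bool \<Rightarrow> complex" where
  "tt k v b = Tv k v b * cnj (Tv k v b)"
definition WW :: "nat \<Rightarrow> bool \<Rightarrow> (bool \<times> bool) ket" where
  "WW k a = tket (Wv k a) (Wv k a)"

definition Nn :: "(bool \<times> bool) op \<Rightarrow> bool ket \<Rightarrow> complex" where
  "Nn M v = (\<Sum>k<4. qf M (WW k False) * tt k v True + qf M (WW k True) * tt k v False)"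
definition Dd :: "(bool \<times> bool) op \<Rightarrow> bool ket \<Rightarrow> complex" where
  "Dd M v = (\<Sum>k<4. \<Sum>a\<in>UNIV. qf M (WW k a) * (tt k v False + tt k v True))"

lemma qf_pos: "positive_op M \<Longrightarrow> Re (qf M z) \<ge> 0"
  by (simp add: positive_op_def qf_def)

lemma per_i:
  assumes "positive_op M"
  shows "Re (Nn M v) \<ge> (3 - rr)/7 * Re (Dd M v)"
proof -
  obtain x0 x1 where X: "Xre v = v2 x0 x1" "cnj x0 = x0" "cnj x1 = x1" using Xre_v2 by blast
  obtain y0 y1 where Y: "Xim v = v2 y0 y1" "cnj y0 = y0" "cnj y1 = y1" using Xim_v2 by blast
  have "Nn M v - Cr * Dd M v = (\<Sum>k<4. \<Sum>a\<in>UNIV. qf M (WW k a) *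
      (tt k v (\<not>a) - Cr * (tt k v False + tt k v True)))"
  proof -
    have "Nn M v - Cr * Dd M v = (\<Sum>k<4. (qf M (WW k False) * tt k v True + qf M (WW k True) * tt k v False)
       - Cr * (\<Sum>a\<in>UNIV. qf M (WW k a) * (tt k v False + tt k v True)))"
      by (simp add: Nn_def Dd_def sum_distrib_left sum_subtractf)
    also have "\<dots> = (\<Sum>k<4. \<Sum>a\<in>UNIV. qf M (WW k a) *
      (tt k v (\<not>a) - Cr * (tt k v False + tt k v True)))"
      by (intro sum.cong refl) (simp add: sum_bool field_simps)
    finally show ?thesis .
  qed
  also have "\<dots> = (\<Sum>k<4. \<Sum>a\<in>UNIV. (coef k a (Xre v) + coef k a (Xim v)) * qf' M (tket (Wv k a) (Wv k a)))"
  proof (intro sum.cong refl)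
    fix k a assume "k \<in> {..<(4::nat)}"
    then have k: "k < 4" by simp
    show "qf M (WW k a) * (tt k v (\<not>a) - Cr * (tt k v False + tt k v True))
       = (coef k a (Xre v) + coef k a (Xim v)) * qf' M (tket (Wv k a) (Wv k a))"
      using coef_sum[OF k, of v a] qf_eq_qf'[of "tket (Wv k a) (Wv k a)" M, OF W_real[OF k]]
      by (simp add: tt_def WW_def mult.commute)
  qed
  also have "\<dots> = dd * (qf' M (V1 x0 x1) + qf' M (V2 x0 x1) + qf' M (V1 y0 y1) + qf' M (V2 y0 y1))"
    by (rule big_sum_id) (simp_all add: X Y)
  also have "\<dots> = dd * (qf M (V1 x0 x1) + qf M (V2 x0 x1) + qf M (V1 y0 y1) + qf M (V2 y0 y1))"
    using V_real[OF X(2,3)] V_real[OF Y(2,3)] by (simp add: qf_eq_qf')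
  finally have eq: "Nn M v - Cr * Dd M v = dd * (qf M (V1 x0 x1) + qf M (V2 x0 x1) + qf M (V1 y0 y1) + qf M (V2 y0 y1))" .
  have R: "Re (Nn M v - Cr * Dd M v) = Re (Nn M v) - (3 - rr)/7 * Re (Dd M v)" by simp
  have "Re (dd * (qf M (V1 x0 x1) + qf M (V2 x0 x1) + qf M (V1 y0 y1) + qf M (V2 y0 y1)))
     = (11 + 8*rr)/28 * (Re (qf M (V1 x0 x1)) + Re (qf M (V2 x0 x1)) + Re (qf M (V1 y0 y1)) + Re (qf M (V2 y0 y1)))"
    by simp
  also have "\<dots> \<ge> 0"
    using qf_pos[OF assms] by (intro mult_nonneg_nonneg add_nonneg_nonneg) simp_all
  finally have "Re (Nn M v - Cr * Dd M v) \<ge> 0" unfolding eq .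
  then show ?thesis unfolding R by simp
qed

lemma rho_num: "rhoAB J M sigma (False,True) (False,True) + rhoAB J M sigma (True,False) (True,False)
    = (\<Sum>i<J. Nn (M i) (sigma i))"
  by (simp add: rho_diag Nn_def tt_def WW_def sum.distrib[symmetric] sum.swap[of _ "{..<4}"])

lemma rho_trace: "trace (rhoAB J M sigma) = (\<Sum>i<J. Dd (M i) (sigma i))"
  by (simp add: trace_def sum_pair sum_bool rho_diag Dd_def tt_def WW_def sum.distrib[symmetric]
      sum.swap[of _ "{..<4}"] distrib_left algebra_simps)

lemma lower_bound:
  assumes "valid_attack J Mvac M sigma" "Re (trace (rhoAB J M sigma)) > 0"
  shows "ebit (rhoAB J M sigma) \<ge> (3 - sqrt 2) / 7"
proof -
  have pos: "\<forall>i<J. positive_op (M i)" using assms(1) by (simp add: valid_attack_def)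
  have "Re (rhoAB J M sigma (False,True) (False,True) + rhoAB J M sigma (True,False) (True,False))
      = (\<Sum>i<J. Re (Nn (M i) (sigma i)))" by (simp add: rho_num)
  also have "\<dots> \<ge> (\<Sum>i<J. (3 - rr)/7 * Re (Dd (M i) (sigma i)))"
    using pos per_i by (intro sum_mono) simp
  finally have "Re (rhoAB J M sigma (False,True) (False,True) + rhoAB J M sigma (True,False) (True,False))
      \<ge> (3 - rr)/7 * Re (trace (rhoAB J M sigma))"
    by (simp add: rho_trace sum_distrib_left)
  then show ?thesis using assms(2) by (simp add: ebit_def pos_le_divide_eq)
qed

definition v4 :: "complex \<Rightarrow> complex \<Rightarrow> complex \<Rightarrow> complex \<Rightarrow> (bool \<times> bool) ket" where
  "v4 a b c d = (\<lambda>(i,j). if i then (if j then d else c) else (if j then b else a))"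

lemma v4_app[simp]: "v4 a b c d (False,False) = a" "v4 a b c d (False,True) = b"
  "v4 a b c d (True,False) = c" "v4 a b c d (True,True) = d" by (simp_all add: v4_def)

lemma tket_v2_v4: "tket (v2 a b) (v2 c d) = v4 (a*c) (a*d) (b*c) (b*d)"
  by (auto simp: tket_def v2_def v4_def intro!: ext)

lemma sum_bb: "sum f (UNIV::(bool\<times>bool) set) = f (False,False) + f (False,True) + f (True,False) + f (True,True)"
  by (simp add: sum_pair sum_bool add.assoc)

lemma inner_v4: "inner (v4 a b c d) (v4 a' b' c' d') = cnj a * a' + cnj b * b' + cnj c * c' + cnj d * d'"
  by (simp add: inner_def sum_bb)

lemma positive_outer: "positive_op (outer u u)"
proof -
  have "inner v (app (outer u u) v) = cnj (inner u v) * inner u v" for v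
    by (simp add: app_outer inner_def sum_distrib_right mult_ac)
  then show ?thesis by (simp add: positive_op_def)
qed

lemma app_half: "app (\<lambda>x y. A x y / 2) v = (\<lambda>i. app A v i / 2)"
  by (auto simp: app_def sum_divide_distrib intro!: ext)
lemma inner_half: "inner v (\<lambda>i. w i / 2) = inner v w / 2"
  by (simp add: inner_def sum_divide_distrib)
lemma positive_half_outer: "positive_op (\<lambda>x y. outer u u x y / 2)"
  using positive_outer[of u] unfolding positive_op_def app_half inner_half by simp

lemma phi_4: "phi 4 = v2 C S" by (simp add: phi_def phi0_val)
lemma phi_5: "phi 5 = v2 S C"
proof -
  have "phi 5 = phi (Suc 0)" by (simp add: phi_def)
  then show ?thesis by (simp add: phi_1)
qed
lemma phi_1': "phi 1 = v2 S C" using phi_1 by simp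
lemma phi_2': "phi (Suc (Suc 0)) = v2 (-S) C" using phi_2 by (simp add: numeral_2_eq_2)
lemma phi_3': "phi (Suc (Suc (Suc 0))) = v2 (-C) S" using phi_3 by (simp add: numeral_3_eq_3)
lemma phi_4': "phi (Suc (Suc (Suc (Suc 0)))) = v2 C S" using phi_4 by (simp add: eval_nat_numeral)
lemma phi_5': "phi (Suc (Suc (Suc (Suc (Suc 0))))) = v2 S C" using phi_5 by (simp add: eval_nat_numeral)
lemmas phi_all = phi_0 phi_1 phi_1' phi_2 phi_2' phi_3 phi_3' phi_4 phi_4' phi_5 phi_5'

lemma lam: "complex_of_real lam_plus = (2 + Rt)/4" "complex_of_real lam_minus = (-2 + Rt)/4"
  by (simp_all add: lam_plus_def lam_minus_def)

lemma chi_f: "chi m = (\<lambda>x. (2 + Rt)/4 * tket (phi m) (phi m) x + (-2 + Rt)/4 * tket (phi (m+2)) (phi (m+2)) x)"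
  by (simp add: chi_def lam)

lemma chi_0: "chi 0 = v4 (Rt/2) (Rt/4) (Rt/4) 0"
  unfolding chi_f by (auto simp: phi_all tket_v2_v4 v4_def field_simps cred intro!: ext)
lemma chi_1: "chi 1 = v4 0 (Rt/4) (Rt/4) (Rt/2)"
  unfolding chi_f by (auto simp: phi_all tket_v2_v4 v4_def field_simps cred intro!: ext)
lemma chi_2: "chi 2 = v4 0 (-Rt/4) (-Rt/4) (Rt/2)"
  unfolding chi_f by (auto simp: phi_all tket_v2_v4 v4_def field_simps cred intro!: ext)
lemma chi_3: "chi 3 = v4 (Rt/2) (-Rt/4) (-Rt/4) 0"
  unfolding chi_f by (auto simp: phi_all tket_v2_v4 v4_def field_simps cred intro!: ext)

lemma dvec: "(\<lambda>z. tket (phi 0) (phi 2) z - tket (phi 2) (phi 0) z) = v4 0 1 (-1) 0"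
  by (auto simp: phi_all tket_v2_v4 v4_def field_simps cred intro!: ext)
lemma dvec': "(\<lambda>z. tket (phi 3) (phi 1) z - tket (phi 1) (phi 3) z) = v4 0 (-1) 1 0"
  by (auto simp: phi_all tket_v2_v4 v4_def field_simps cred intro!: ext)

lemma Mvac_alt: "Mvac_opt = (\<lambda>x y. outer (\<lambda>z. tket (phi 3) (phi 1) z - tket (phi 1) (phi 3) z)
                                 (\<lambda>z. tket (phi 3) (phi 1) z - tket (phi 1) (phi 3) z) x y / 2)"
  unfolding Mvac_opt_def dvec dvec' by (auto simp: outer_def v4_def intro!: ext)

lemma Mvac_kills: "app Mvac_opt (tket (phi m) (phi m)) = (\<lambda>_. 0)"
proof -
  have "inner (v4 0 1 (-1) 0) (tket (phi m) (phi m)) = 0"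
    by (simp add: inner_def sum_bb tket_def)
  then show ?thesis unfolding Mvac_opt_def dvec
    by (auto simp: app_def outer_def sum_divide_distrib[symmetric] sum_distrib_left[symmetric] mult.assoc inner_def intro!: ext)
qed

lemma sum4': "(\<Sum>k<4. f k) = f 0 + f (Suc 0) + f 2 + f (3::nat)"
  by (simp add: eval_nat_numeral)

lemma povm_sum: "Mvac_opt x y + (\<Sum>i<4. Mopt i x y) = idop x y"
proof -
  obtain x1 x2 y1 y2 where xy: "x = (x1,x2)" "y = (y1,y2)" by fastforce
  show ?thesis
    unfolding sum4 Mopt_def Mvac_opt_def dvec chi_0 chi_1 chi_2 chi_3 xy
    by (cases x1; cases x2; cases y1; cases y2) (simp_all add: outer_def idop_def field_simps cred)
qed

lemma phi_norm: "i < 4 \<Longrightarrow> inner (phi i) (phi i) = 1"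
proof -
  have cs: "C * C + S * S = 1" "S * S + C * C = 1" by (simp_all add: cred field_simps)
  assume "i < 4"
  then have "i = 0 \<or> i = Suc 0 \<or> i = 2 \<or> i = 3" by auto
  then show ?thesis
    by (elim disjE) (simp_all add: phi_0 phi_1 phi_2 phi_3 inner_def sum_bool cs)
qed

lemma valid_opt: "valid_attack 4 Mvac_opt Mopt phi"
  unfolding valid_attack_def
  using positive_outer phi_norm povm_sum
  by (auto simp: Mvac_opt_def Mopt_def positive_half_outer)

lemma qf_outer: "qf (outer u u) w = cnj (inner u w) * inner u w"
proof -
  have "inner w (app (outer u u) w) = cnj (inner u w) * inner u w"
    by (simp add: app_outer inner_def sum_distrib_right mult_ac)
  then show ?thesis by (simp add: qf_def)
qed

lemma WW_v4: "WW k a = v4 (Wv k a False * Wv k a False) (Wv k a False * Wv k a True)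
   (Wv k a True * Wv k a False) (Wv k a True * Wv k a True)"
  by (auto simp: WW_def tket_def v4_def intro!: ext)

lemma Nn0: "Nn (Mopt 0) (phi 0) = (2 - Rt)/4"
  unfolding Nn_def sum4' Mopt_def qf_outer chi_0 WW_v4 tt_def
  by (simp add: Wv_all Tv_all phi_all app_m2 inner_v4 field_simps cred)
lemma Dd0: "Dd (Mopt 0) (phi 0) = (4 - Rt)/4"
  unfolding Dd_def sum4' Mopt_def qf_outer chi_0 WW_v4 tt_def
  by (simp add: Wv_all Tv_all phi_all app_m2 inner_v4 sum_bool field_simps cred)

lemma Nn1: "Nn (Mopt 1) (phi 1) = (2 - Rt)/4"
  unfolding Nn_def sum4' Mopt_def qf_outer chi_1 WW_v4 tt_def
  by (simp add: Wv_all Tv_all phi_all app_m2 inner_v4 field_simps cred)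

lemma Dd1: "Dd (Mopt 1) (phi 1) = (4 - Rt)/4"
  unfolding Dd_def sum4' Mopt_def qf_outer chi_1 WW_v4 tt_def
  by (simp add: Wv_all Tv_all phi_all app_m2 inner_v4 sum_bool field_simps cred)

lemma Nn2: "Nn (Mopt 2) (phi 2) = (2 - Rt)/4"
  unfolding Nn_def sum4' Mopt_def qf_outer chi_2 WW_v4 tt_def
  by (simp add: Wv_all Tv_all phi_all app_m2 inner_v4 field_simps cred)

lemma Dd2: "Dd (Mopt 2) (phi 2) = (4 - Rt)/4"
  unfolding Dd_def sum4' Mopt_def qf_outer chi_2 WW_v4 tt_def
  by (simp add: Wv_all Tv_all phi_all app_m2 inner_v4 sum_bool field_simps cred)

lemma Nn3: "Nn (Mopt 3) (phi 3) = (2 - Rt)/4"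
  unfolding Nn_def sum4' Mopt_def qf_outer chi_3 WW_v4 tt_def
  by (simp add: Wv_all Tv_all phi_all app_m2 inner_v4 field_simps cred)

lemma Dd3: "Dd (Mopt 3) (phi 3) = (4 - Rt)/4"
  unfolding Dd_def sum4' Mopt_def qf_outer chi_3 WW_v4 tt_def
  by (simp add: Wv_all Tv_all phi_all app_m2 inner_v4 sum_bool field_simps cred)

theorem theorem5:
  shows "(\<forall>J Mvac M sigma. valid_attack J Mvac M sigma \<longrightarrow>
              Re (trace (rhoAB J M sigma)) > 0 \<longrightarrow> ebit (rhoAB J M sigma) \<ge> (3 - sqrt 2) / 7)
       \<and> valid_attack 4 Mvac_opt Mopt phi
       \<and> Re (trace (rhoAB 4 Mopt phi)) > 0
       \<and> ebit (rhoAB 4 Mopt phi) = (3 - sqrt 2) / 7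
       \<and> Mvac_opt = (\<lambda>x y. outer (\<lambda>z. tket (phi 3) (phi 1) z - tket (phi 1) (phi 3) z)
                                 (\<lambda>z. tket (phi 3) (phi 1) z - tket (phi 1) (phi 3) z) x y / 2)
       \<and> (\<forall>m. app Mvac_opt (tket (phi m) (phi m)) = (\<lambda>_. 0))"
proof -
  have tr: "trace (rhoAB 4 Mopt phi) = 4 - Rt"
    unfolding rho_trace sum4 Dd0 Dd1 Dd2 Dd3 by (simp add: field_simps)
  have nu: "rhoAB 4 Mopt phi (False,True) (False,True) + rhoAB 4 Mopt phi (True,False) (True,False) = 2 - Rt"
    unfolding rho_num sum4 Nn0 Nn1 Nn2 Nn3 by (simp add: field_simps)
  have r4: "rr < 4"
  proof -
    have "rr < sqrt 16" by (rule real_sqrt_less_mono) simp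
    then show ?thesis by simp
  qed
  have trpos: "Re (trace (rhoAB 4 Mopt phi)) > 0" unfolding tr using r4 by simp
  have key: "(3 - rr) * (4 - rr) = 7 * (2 - rr)" by (simp add: algebra_simps)
  have "ebit (rhoAB 4 Mopt phi) = (2 - rr) / (4 - rr)" unfolding ebit_def nu tr by simp
  also have "\<dots> = (3 - rr) / 7" using r4 key by (simp add: field_simps)
  finally have eb: "ebit (rhoAB 4 Mopt phi) = (3 - sqrt 2) / 7" .
  show ?thesis
    using lower_bound valid_opt trpos eb Mvac_alt Mvac_kills by blast
qed

end
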